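(* Under assumptions (i) and (ii) below, $\mathcal T\subset\mathcal L(H_1,H_2)$, where $\mathcal T=\{H\in\mathcal O:(H\psi_k,\psi_k)=0\text{ for all }k=1,\dots,N\}$ (a real space of dimension $N(N-1)$). (i) $(H_1\psi_k,\psi_j)\ne0$ for all $k\ne j$; (ii) $\lambda_k-\lambda_l\ne\lambda_{k'}-\lambda_{l'}$ for all ordered pairs $(k,l)\ne(k',l')$, where $\lambda_k$ are the eigenvalues of $H_2$ and $\psi_k$ corresponding orthonormal eigenvectors.
   Context: $\mathcal H=\mathbb C^N$, $N>1$. $\mathcal O$ is the real vector space of Hermitian operators on $\mathcal H$, with bracket $\{A,B\}=i(AB-BA)$. For $H_1,H_2\in\mathcal O$, $\mathcal L(H_1,H_2)$ is the real linear span of $H_1,H_2$ and all iterated brackets $\{H_1,H_2\},\{H_1,\{H_1,H_2\}\},\{H_2,\{H_1,H_2\}\},\dots$. *)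

theory Defs
  imports "HOL-Analysis.Analysis"
begin

text \<open>Operators on H = C^N are N x N complex matrices indexed by a finite type 'n
  with CARD('n) = N.\<close>

type_synonym 'n cmat = "complex ^ 'n ^ 'n"

definition herm :: "'n::finite cmat \<Rightarrow> bool" where
  "herm A \<longleftrightarrow> (\<forall>i j. A $ i $ j = cnj (A $ j $ i))"

definition cinner :: "complex ^ 'n::finite \<Rightarrow> complex ^ 'n \<Rightarrow> complex" where
  "cinner x y = (\<Sum>i\<in>UNIV. x $ i * cnj (y $ i))"

definition qbr :: "'n::finite cmat \<Rightarrow> 'n cmat \<Rightarrow> 'n cmat" where
  "qbr A B = (\<chi> i j. \<i> * ((A ** B) $ i $ j - (B ** A) $ i $ j))"

inductive_set iter_brackets :: "'n::finite cmat \<Rightarrow> 'n cmat \<Rightarrow> 'n cmat set"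
  for H1 H2 where
  gen1: "H1 \<in> iter_brackets H1 H2"
| gen2: "H2 \<in> iter_brackets H1 H2"
| br: "A \<in> iter_brackets H1 H2 \<Longrightarrow> B \<in> iter_brackets H1 H2 \<Longrightarrow>
        qbr A B \<in> iter_brackets H1 H2"

text \<open>L(H1,H2): real linear span (span = real_vector.span).\<close>
definition Lie_gen :: "'n::finite cmat \<Rightarrow> 'n cmat \<Rightarrow> 'n cmat set" where
  "Lie_gen H1 H2 = span (iter_brackets H1 H2)"

definition Tset :: "('n::finite \<Rightarrow> complex ^ 'n) \<Rightarrow> 'n cmat set" where
  "Tset \<psi> = {H. herm H \<and> (\<forall>k. cinner (H *v \<psi> k) (\<psi> k) = 0)}"

end

theory Submission
  imports Defs
begin

definition cc :: "('n::finite \<Rightarrow> complex^'n) \<Rightarrow> 'n cmat \<Rightarrow> 'n \<Rightarrow> 'n \<Rightarrow> complex" where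
  "cc \<psi> X k j = cinner (X *v \<psi> j) (\<psi> k)"

lemma cc_sum: "cc \<psi> X k j = (\<Sum>a\<in>UNIV. \<Sum>b\<in>UNIV. cnj (\<psi> k $ a) * X$a$b * \<psi> j $ b)"
  unfolding cc_def cinner_def matrix_vector_mult_def
  by (simp add: sum_distrib_left sum_distrib_right mult.commute mult.left_commute)

lemma cscale: "r *\<^sub>R (z::complex) = of_real r * z" by (simp add: scaleR_conv_of_real)

lemma cc_add: "cc \<psi> (X + Y) k j = cc \<psi> X k j + cc \<psi> Y k j"
  unfolding cc_sum by (simp add: sum.distrib algebra_simps)

lemma cc_scale: "cc \<psi> (r *\<^sub>R X) k j = of_real r * cc \<psi> X k j"
  unfolding cc_sum by (simp add: sum_distrib_left vector_scaleR_component cscale algebra_simps)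

lemma cc_linear: "linear (\<lambda>X. cc \<psi> X k j)"
  by (rule linearI) (simp_all only: cc_add cc_scale cscale)

lemma cc_sumset: "finite P \<Longrightarrow> cc \<psi> (\<Sum>p\<in>P. f p) k j = (\<Sum>p\<in>P. cc \<psi> (f p) k j)"
  using linear_sum[OF cc_linear] by blast

lemma cc_mat: "cc \<psi> X k j = (((\<chi> k a. cnj (\<psi> k $ a)) ** X) ** (\<chi> a k. \<psi> k $ a)) $ k $ j"
  unfolding cc_sum matrix_matrix_mult_def
  apply (simp add: sum_distrib_right)
  apply (subst sum.swap)
  apply simp
  done

lemma herm_cc: "herm A \<Longrightarrow> cc \<psi> A j k = cnj (cc \<psi> A k j)"
proof -
  assume h: "herm A"
  have hc: "\<And>a b. cnj (A$a$b) = A$b$a" using h unfolding herm_def by (metis complex_cnj_cnj)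
  have "cnj (cc \<psi> A k j) = (\<Sum>a\<in>UNIV. \<Sum>b\<in>UNIV. \<psi> k$a * A$b$a * cnj (\<psi> j$b))"
    by (simp add: cc_sum hc)
  also have "\<dots> = (\<Sum>b\<in>UNIV. \<Sum>a\<in>UNIV. \<psi> k$a * A$b$a * cnj (\<psi> j$b))"
    by (rule sum.swap)
  also have "\<dots> = cc \<psi> A j k" by (simp add: cc_sum mult_ac)
  finally show ?thesis by simp
qed

lemma qbr_linear: "linear (qbr H)"
  apply (rule linearI)
  unfolding qbr_def matrix_matrix_mult_def
   apply (simp add: vec_eq_iff sum.distrib algebra_simps)
  apply (simp add: vec_eq_iff cscale algebra_simps sum_distrib_left)
  done

lemma cinner_adj:
  assumes h: "herm A"
  shows "cinner (A *v x) y = cinner x (A *v y)"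
proof -
  have hc: "\<And>a b. cnj (A$a$b) = A$b$a" using h unfolding herm_def by (metis complex_cnj_cnj)
  have "cinner (A *v x) y = (\<Sum>i\<in>UNIV. \<Sum>j\<in>UNIV. A$i$j * x$j * cnj (y$i))"
    unfolding cinner_def matrix_vector_mult_def by (simp add: sum_distrib_right)
  also have "\<dots> = (\<Sum>j\<in>UNIV. \<Sum>i\<in>UNIV. A$i$j * x$j * cnj (y$i))" by (rule sum.swap)
  also have "\<dots> = cinner x (A *v y)"
    unfolding cinner_def matrix_vector_mult_def by (simp add: sum_distrib_left hc mult_ac)
  finally show ?thesis .
qed

lemma cinner_diff1: "cinner (a - b) v = cinner a v - cinner b v"
  unfolding cinner_def by (simp add: algebra_simps sum_subtractf)

lemma cinner_scale1: "cinner (c *s a) v = c * cinner a v"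
  unfolding cinner_def by (simp add: algebra_simps sum_distrib_left)

lemma cinner_scale2: "cinner a (c *s v) = cnj c * cinner a v"
  unfolding cinner_def by (simp add: algebra_simps sum_distrib_left)

lemma mv_scale: "(A::complex^'n::finite^'m) *v (c *s x) = c *s (A *v x)"
  unfolding matrix_vector_mult_def by (simp add: vec_eq_iff sum_distrib_left mult_ac)

lemma qbr_mv: "qbr X Y *v v = \<i> *s ((X ** Y) *v v - (Y ** X) *v v)"
  unfolding qbr_def matrix_vector_mult_def
  by (simp add: vec_eq_iff algebra_simps sum_distrib_left sum_subtractf)

lemma cc_qbr:
  assumes h2: "herm H2" and eig: "\<forall>k. H2 *v \<psi> k = complex_of_real (lam k) *s \<psi> k"
  shows "cc \<psi> (qbr H2 Y) k j = \<i> * of_real (lam k - lam j) * cc \<psi> Y k j"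
proof -
  have 1: "cinner ((H2 ** Y) *v \<psi> j) (\<psi> k) = of_real (lam k) * cc \<psi> Y k j"
    by (simp add: matrix_vector_mul_assoc[symmetric] cinner_adj[OF h2] eig cinner_scale2 cc_def)
  have 2: "cinner ((Y ** H2) *v \<psi> j) (\<psi> k) = of_real (lam j) * cc \<psi> Y k j"
    by (simp add: matrix_vector_mul_assoc[symmetric] eig mv_scale cinner_scale1 cc_def)
  show ?thesis
    unfolding cc_def qbr_mv cinner_scale1 cinner_diff1
    using 1 2 by (simp add: cc_def algebra_simps)
qed

lemma cc_inj:
  fixes \<psi> :: "'n::finite \<Rightarrow> complex^'n"
  assumes orth: "\<forall>k j. cinner (\<psi> k) (\<psi> j) = (if k = j then 1 else 0)"
    and z: "\<forall>k j. cc \<psi> X k j = 0"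
  shows "X = 0"
proof -
  define V :: "complex^'n^'n" where "V = (\<chi> k a. cnj (\<psi> k $ a))"
  define U :: "complex^'n^'n" where "U = (\<chi> a k. \<psi> k $ a)"
  have VU: "V ** U = mat 1"
  proof -
    have "(V ** U) $ k $ j = (if k = j then 1 else 0)" for k j
    proof -
      have "(V ** U) $ k $ j = cinner (\<psi> j) (\<psi> k)"
        unfolding V_def U_def matrix_matrix_mult_def cinner_def by (simp add: mult.commute)
      then show ?thesis using orth by auto
    qed
    then show ?thesis by (simp add: vec_eq_iff mat_def)
  qed
  then have UV: "U ** V = mat 1" using matrix_left_right_inverse by blast
  have M0: "V ** X ** U = 0"
    using z unfolding cc_mat V_def U_def by (simp add: vec_eq_iff)
  have "X = (U ** V) ** X ** (U ** V)" using UV by simp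
  also have "\<dots> = U ** (V ** X ** U) ** V" by (simp add: matrix_mul_assoc)
  also have "\<dots> = 0" unfolding M0 by (simp add: vec_eq_iff matrix_matrix_mult_def)
  finally show ?thesis .
qed

lemma cc_diff: "cc \<psi> (X - Y) k j = cc \<psi> X k j - cc \<psi> Y k j"
  using linear_diff[OF cc_linear] by blast

lemma S_H1: "H1 \<in> Lie_gen H1 H2"
  unfolding Lie_gen_def by (rule span_superset[THEN subsetD]) (rule iter_brackets.gen1)

lemma S_ad: assumes "X \<in> Lie_gen H1 H2" shows "qbr H2 X \<in> Lie_gen H1 H2"
proof -
  have "qbr H2 X \<in> qbr H2 ` span (iter_brackets H1 H2)" using assms unfolding Lie_gen_def by blast
  also have "\<dots> = span (qbr H2 ` iter_brackets H1 H2)"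
    using span_linear_image[OF qbr_linear] by blast
  also have "\<dots> \<subseteq> span (iter_brackets H1 H2)"
    by (rule span_mono) (auto intro: iter_brackets.br iter_brackets.gen2)
  finally show ?thesis unfolding Lie_gen_def .
qed

lemma S_comb: "X \<in> Lie_gen H1 H2 \<Longrightarrow> Y \<in> Lie_gen H1 H2 \<Longrightarrow> a *\<^sub>R X + b *\<^sub>R Y \<in> Lie_gen H1 H2"
  unfolding Lie_gen_def by (intro span_add span_mul)

lemma S_sum: "finite P \<Longrightarrow> (\<And>p. p \<in> P \<Longrightarrow> G p \<in> Lie_gen H1 H2) \<Longrightarrow> (\<Sum>p\<in>P. G p) \<in> Lie_gen H1 H2"
  unfolding Lie_gen_def by (rule span_sum)

lemma S_filter:
  assumes h2: "herm H2" and eig: "\<forall>k. H2 *v \<psi> k = complex_of_real (lam k) *s \<psi> k"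
    and W: "finite W"
  shows "\<exists>X\<in>Lie_gen H1 H2. \<forall>a b. cc \<psi> X a b =
     cc \<psi> (qbr H2 H1) a b * of_real (\<Prod>w\<in>W. w - (lam a - lam b)^2)"
  using W
proof (induction W rule: finite_induct)
  case empty
  then show ?case using S_ad[OF S_H1] by auto
next
  case (insert w F)
  then obtain X where X: "X \<in> Lie_gen H1 H2" and
    cX: "\<forall>a b. cc \<psi> X a b = cc \<psi> (qbr H2 H1) a b * of_real (\<Prod>w\<in>F. w - (lam a - lam b)^2)"
    by blast
  let ?X = "1 *\<^sub>R qbr H2 (qbr H2 X) + w *\<^sub>R X"
  have "?X \<in> Lie_gen H1 H2" by (intro S_comb S_ad X)
  moreover have "cc \<psi> ?X a b = cc \<psi> (qbr H2 H1) a b * of_real (\<Prod>w\<in>insert w F. w - (lam a - lam b)^2)" for a b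
  proof -
    have "cc \<psi> ?X a b = (of_real (w - (lam a - lam b)^2)) * cc \<psi> X a b"
      by (simp add: cc_add cc_scale cc_qbr[OF h2 eig] algebra_simps power2_eq_square)
    then show ?thesis using insert(1,2) cX by (simp add: algebra_simps)
  qed
  ultimately show ?case by blast
qed

definition pat :: "'n \<Rightarrow> 'n \<Rightarrow> complex \<Rightarrow> 'n \<Rightarrow> 'n \<Rightarrow> complex" where
  "pat k j z a b = (if (a,b) = (k,j) then z else if (a,b) = (j,k) then cnj z else 0)"

lemma S_pair0:
  fixes \<psi> :: "'n::finite \<Rightarrow> complex^'n"
  assumes h1: "herm H1" and h2: "herm H2"
    and eig: "\<forall>k. H2 *v \<psi> k = complex_of_real (lam k) *s \<psi> k"
    and i: "\<forall>k j. k \<noteq> j \<longrightarrow> cinner (H1 *v \<psi> k) (\<psi> j) \<noteq> 0"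
    and ii: "\<forall>k l k' l'. k \<noteq> l \<and> k' \<noteq> l' \<and> (k, l) \<noteq> (k', l') \<longrightarrow>
               lam k - lam l \<noteq> lam k' - lam l'"
    and kj: "k \<noteq> j"
  shows "\<exists>X\<in>Lie_gen H1 H2. \<exists>u. u \<noteq> 0 \<and> (\<forall>a b. cc \<psi> X a b = pat k j u a b)"
proof -
  define om where "om a b = lam a - lam b" for a b
  define W where "W = {om a b ^ 2 | a b. a \<noteq> b \<and> om a b ^ 2 \<noteq> om k j ^ 2}"
  have fW: "finite W"
  proof -
    have "W \<subseteq> (\<lambda>(a,b). om a b ^ 2) ` UNIV" unfolding W_def by auto
    then show ?thesis by (rule finite_subset) simp
  qed
  obtain X where X: "X \<in> Lie_gen H1 H2" and
    cX: "\<forall>a b. cc \<psi> X a b = cc \<psi> (qbr H2 H1) a b * of_real (\<Prod>w\<in>W. w - (lam a - lam b)^2)"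
    using S_filter[OF h2 eig fW] by blast
  define r where "r = (\<Prod>w\<in>W. w - om k j ^2)"
  have r0: "r \<noteq> 0" unfolding r_def using fW by (auto simp: W_def)
  have om0: "om k j \<noteq> 0"
  proof
    assume "om k j = 0"
    then have "lam k - lam j = lam j - lam k" unfolding om_def by simp
    moreover have "lam k - lam j \<noteq> lam j - lam k" using ii[rule_format, of k j j k] kj by simp
    ultimately show False by simp
  qed
  have sq: "(a,b) = (k,j) \<or> (a,b) = (j,k)" if "a \<noteq> b" "om a b ^ 2 = om k j ^ 2" for a b
  proof -
    have "om a b = om k j \<or> om a b = - om k j" using that(2) by (simp add: power2_eq_iff)
    moreover have "- om k j = om j k" unfolding om_def by simp
    ultimately have *: "om a b = om k j \<or> om a b = om j k" by simp
    show ?thesis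
    proof (rule ccontr)
      assume nc: "\<not> ((a,b) = (k,j) \<or> (a,b) = (j,k))"
      have "lam a - lam b \<noteq> lam k - lam j" using ii[rule_format, of a b k j] that(1) kj nc by simp
      moreover have "lam a - lam b \<noteq> lam j - lam k" using ii[rule_format, of a b j k] that(1) kj nc by simp
      ultimately show False using * unfolding om_def by auto
    qed
  qed
  have b0: "cc \<psi> H1 k j \<noteq> 0"
  proof -
    have "cc \<psi> H1 j k \<noteq> 0" using i[rule_format, of k j] kj unfolding cc_def by simp
    moreover have "cc \<psi> H1 k j = cnj (cc \<psi> H1 j k)" by (rule herm_cc[OF h1])
    ultimately show ?thesis by simp
  qed
  define u where "u = \<i> * of_real (om k j) * cc \<psi> H1 k j * of_real r"
  have u0: "u \<noteq> 0" unfolding u_def using r0 om0 b0 by simp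
  have "cc \<psi> X a b = pat k j u a b" for a b
  proof -
    have base: "cc \<psi> X a b = \<i> * of_real (om a b) * cc \<psi> H1 a b * of_real (\<Prod>w\<in>W. w - om a b ^2)"
      using cX[rule_format, of a b] cc_qbr[OF h2 eig, of H1 a b] unfolding om_def by simp
    consider "a = b" | "(a,b) = (k,j)" | "(a,b) = (j,k)" | "a \<noteq> b" "(a,b) \<noteq> (k,j)" "(a,b) \<noteq> (j,k)"
      by blast
    then show ?thesis
    proof cases
      case 1 then show ?thesis using kj base by (auto simp add: om_def pat_def)
    next
      case 2 then show ?thesis using base by (simp add: pat_def u_def r_def)
    next
      case 3
      have e1: "om j k = - om k j" unfolding om_def by simp
      have e2: "om j k ^ 2 = om k j ^ 2" unfolding om_def by (simp add: power2_commute)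
      have e3: "cc \<psi> H1 j k = cnj (cc \<psi> H1 k j)" using herm_cc[OF h1] by blast
      show ?thesis using 3 base kj e1 e2 e3 by (simp add: pat_def u_def r_def)
    next
      case 4
      then have "om a b ^ 2 \<in> W" unfolding W_def using sq by blast
      then have "(\<Prod>w\<in>W. w - om a b ^2) = 0"
        using fW by (intro prod_zero) auto
      then show ?thesis using 4 base by (auto simp: pat_def)
    qed
  qed
  then show ?thesis using X u0 by blast
qed

lemma pat_lin: "of_real \<alpha> * pat k j u a b + of_real \<beta> * pat k j v a b = pat k j (of_real \<alpha> * u + of_real \<beta> * v) a b"
proof (cases "(a,b) = (k,j)")
  case True then show ?thesis unfolding pat_def by (simp only: simp_thms if_True)
next
  case False
  then show ?thesis
  proof (cases "(a,b) = (j,k)")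
    case True
    have "cnj (of_real \<alpha> * u + of_real \<beta> * v) = of_real \<alpha> * cnj u + of_real \<beta> * cnj v"
      by (simp only: complex_cnj_add complex_cnj_mult complex_cnj_complex_of_real)
    then show ?thesis unfolding pat_def using False True by (simp only: simp_thms if_True if_False)
  next
    case F2: False
    then show ?thesis unfolding pat_def using False by (simp only: if_False mult_zero_right add_0)
  qed
qed

lemma S_pair:
  fixes \<psi> :: "'n::finite \<Rightarrow> complex^'n"
  assumes h1: "herm H1" and h2: "herm H2"
    and eig: "\<forall>k. H2 *v \<psi> k = complex_of_real (lam k) *s \<psi> k"
    and i: "\<forall>k j. k \<noteq> j \<longrightarrow> cinner (H1 *v \<psi> k) (\<psi> j) \<noteq> 0"
    and ii: "\<forall>k l k' l'. k \<noteq> l \<and> k' \<noteq> l' \<and> (k, l) \<noteq> (k', l') \<longrightarrow>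
               lam k - lam l \<noteq> lam k' - lam l'"
    and kj: "k \<noteq> j"
  shows "\<exists>G\<in>Lie_gen H1 H2. \<forall>a b. cc \<psi> G a b = pat k j z a b"
proof -
  obtain X u where X: "X \<in> Lie_gen H1 H2" and u0: "u \<noteq> 0" and cX: "\<forall>a b. cc \<psi> X a b = pat k j u a b"
    using S_pair0[OF h1 h2 eig i ii kj] by blast
  define om where "om = lam k - lam j"
  have om0: "om \<noteq> 0"
  proof
    assume "om = 0"
    then have "lam k - lam j = lam j - lam k" unfolding om_def by simp
    moreover have "lam k - lam j \<noteq> lam j - lam k" using ii[rule_format, of k j j k] kj by simp
    ultimately show False by simp
  qed
  define v where "v = \<i> * of_real om * u"
  have cY: "cc \<psi> (qbr H2 X) a b = pat k j v a b" for a b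
  proof -
    have e: "cc \<psi> (qbr H2 X) a b = \<i> * of_real (lam a - lam b) * pat k j u a b"
      using cc_qbr[OF h2 eig, of X a b] cX by simp
    consider "(a,b) = (k,j)" | "(a,b) = (j,k)" | "(a,b) \<noteq> (k,j)" "(a,b) \<noteq> (j,k)" by blast
    then show ?thesis
    proof cases
      case 1
      then have ab: "a = k" "b = j" by auto
      have "pat k j u a b = u" "pat k j v a b = v" unfolding pat_def ab by simp_all
      then show ?thesis using e ab by (simp add: v_def om_def)
    next
      case 2
      then have ab: "a = j" "b = k" by auto
      have "pat k j u a b = cnj u" "pat k j v a b = cnj v" unfolding pat_def ab using kj by simp_all
      moreover have "cnj v = \<i> * of_real (lam j - lam k) * cnj u"
        unfolding v_def om_def by (simp add: algebra_simps)
      ultimately show ?thesis using e ab by simp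
    next
      case 3
      then have "pat k j u a b = 0" "pat k j v a b = 0" unfolding pat_def by auto
      then show ?thesis using e by simp
    qed
  qed
  define q where "q = z / u"
  define \<alpha> where "\<alpha> = Re q"
  define \<beta> where "\<beta> = Im q / om"
  have "of_real \<alpha> * u + of_real \<beta> * v = (of_real (Re q) + \<i> * of_real (Im q)) * u"
    unfolding v_def \<alpha>_def \<beta>_def using om0 by (simp add: algebra_simps)
  also have "\<dots> = z" using u0 by (simp add: complex_eq[symmetric] q_def)
  finally have z: "of_real \<alpha> * u + of_real \<beta> * v = z" .
  let ?G = "\<alpha> *\<^sub>R X + \<beta> *\<^sub>R qbr H2 X"
  have "?G \<in> Lie_gen H1 H2" by (intro S_comb S_ad X)
  moreover have "cc \<psi> ?G a b = pat k j z a b" for a b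
  proof -
    have "cc \<psi> ?G a b = of_real \<alpha> * pat k j u a b + of_real \<beta> * pat k j v a b"
      by (simp only: cc_add cc_scale cY cX[rule_format])
    also have "\<dots> = pat k j z a b" by (simp only: pat_lin z)
    finally show ?thesis .
  qed
  ultimately show ?thesis by blast
qed

theorem mainTheorem7:
  fixes H1 H2 :: "complex ^ 'n::finite ^ 'n"
    and \<psi> :: "'n \<Rightarrow> complex ^ 'n"
    and lam :: "'n \<Rightarrow> real"
  assumes N: "CARD('n) > 1"
    and h1: "herm H1" and h2: "herm H2"
    and orth: "\<forall>k j. cinner (\<psi> k) (\<psi> j) = (if k = j then 1 else 0)"
    and eig: "\<forall>k. H2 *v \<psi> k = complex_of_real (lam k) *s \<psi> k"
    and i: "\<forall>k j. k \<noteq> j \<longrightarrow> cinner (H1 *v \<psi> k) (\<psi> j) \<noteq> 0"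
    and ii: "\<forall>k l k' l'. k \<noteq> l \<and> k' \<noteq> l' \<and> (k, l) \<noteq> (k', l') \<longrightarrow>
               lam k - lam l \<noteq> lam k' - lam l'"
  shows "Tset \<psi> \<subseteq> Lie_gen H1 H2"
proof
  fix H assume H: "H \<in> Tset \<psi>"
  have hH: "herm H" using H unfolding Tset_def by blast
  have dH: "\<And>k. cc \<psi> H k k = 0" using H unfolding Tset_def cc_def by blast
  define P where "P = {p::'n\<times>'n. fst p \<noteq> snd p}"
  have fP: "finite P" by simp
  define h where "h = cc \<psi> H"
  have ex: "\<forall>p\<in>P. \<exists>G. G \<in> Lie_gen H1 H2 \<and>
      (\<forall>a b. cc \<psi> G a b = pat (fst p) (snd p) (h (fst p) (snd p)) a b)"
  proof
    fix p assume "p \<in> P"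
    then have "fst p \<noteq> snd p" unfolding P_def by simp
    from S_pair[OF h1 h2 eig i ii this, of "h (fst p) (snd p)"] show
      "\<exists>G. G \<in> Lie_gen H1 H2 \<and> (\<forall>a b. cc \<psi> G a b = pat (fst p) (snd p) (h (fst p) (snd p)) a b)"
      by blast
  qed
  obtain G where G: "\<forall>p\<in>P. G p \<in> Lie_gen H1 H2 \<and>
      (\<forall>a b. cc \<psi> (G p) a b = pat (fst p) (snd p) (h (fst p) (snd p)) a b)"
    using bchoice[OF ex] by blast
  define Gt where "Gt = (\<Sum>p\<in>P. (1/2::real) *\<^sub>R G p)"
  have GtS: "Gt \<in> Lie_gen H1 H2"
    unfolding Gt_def using G by (intro S_sum fP) (auto simp: Lie_gen_def intro: span_mul)
  have tm: "pat (fst p) (snd p) (h (fst p) (snd p)) a b =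
      (if p = (a,b) then h a b else 0) + (if p = (b,a) then h a b else 0)"
    if "p \<in> P" "a \<noteq> b" for p a b
  proof -
    obtain k j where p: "p = (k,j)" by (cases p)
    have kj: "k \<noteq> j" using that(1) p unfolding P_def by simp
    have hc: "h b a = cnj (h a b)" unfolding h_def by (rule herm_cc[OF hH])
    show ?thesis using kj that(2) hc unfolding p pat_def by auto
  qed
  have cGt: "cc \<psi> Gt a b = cc \<psi> H a b" for a b
  proof -
    have "cc \<psi> Gt a b = (\<Sum>p\<in>P. of_real (1/2) * pat (fst p) (snd p) (h (fst p) (snd p)) a b)"
      unfolding Gt_def cc_sumset[OF fP] cc_scale using G by simp
    also have "\<dots> = h a b"
    proof (cases "a = b")
      case True
      have "pat (fst p) (snd p) (h (fst p) (snd p)) a b = 0" if "p \<in> P" for p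
        using that True unfolding P_def pat_def by (cases p) auto
      then show ?thesis using True dH unfolding h_def by simp
    next
      case False
      have "(\<Sum>p\<in>P. of_real (1/2) * pat (fst p) (snd p) (h (fst p) (snd p)) a b)
          = (\<Sum>p\<in>P. of_real (1/2) * ((if p = (a,b) then h a b else 0) + (if p = (b,a) then h a b else 0)))"
        using tm False by (intro sum.cong) auto
      also have "\<dots> = of_real (1/2) * ((\<Sum>p\<in>P. if p = (a,b) then h a b else 0) + (\<Sum>p\<in>P. if p = (b,a) then h a b else 0))"
        by (simp only: sum.distrib[symmetric] sum_distrib_left)
      also have "\<dots> = of_real (1/2) * (h a b + h a b)"
      proof -
        have ab: "(a,b) \<in> P" "(b,a) \<in> P" using False unfolding P_def by auto
        show ?thesis using ab by (simp only: sum.delta[OF fP] if_True)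
      qed
      also have "\<dots> = h a b" by simp
      finally show ?thesis .
    qed
    finally show ?thesis unfolding h_def .
  qed
  have "Gt - H = 0"
    by (rule cc_inj[OF orth]) (simp add: cc_diff cGt)
  then show "H \<in> Lie_gen H1 H2" using GtS by simp
qed

end
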